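(* Let $\mathcal{P}$ be a Poisson point process of intensity one in $\mathbb{R}^d$ and let $a_0>0$. For $x\in\mathbb{R}^d$, $0<a\le a_0$ and $n\ge\max(2a_0,1)$ with $B(x,a)\subset B(n)$, and every $q\ge 1$, $$\mathbb{E}\big(|M(\mathcal{P}\cap B(n))-M(\mathcal{P}\cap[B(n)\setminus B(x,a)])|^q\big)\le C_q,$$ where $C_q$ depends only on $a_0$, $d$ and $q$.
   Context: For a finite set $X\subset\mathbb{R}^d$, $M(X)$ is the total length of a minimal spanning tree of the complete graph on $X$ with Euclidean edge lengths. $B(x,r)=x+[-r,r]^d$ and $B(r)=B(0,r)$. *)

theory Defs
  imports "HOL-Probability.Probability"
begin

definition cube :: "'b::euclidean_space \<Rightarrow> real \<Rightarrow> 'b set" where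
  "cube x r = cbox (x - r *\<^sub>R One) (x + r *\<^sub>R One)"

definition graph_edges :: "'b set \<Rightarrow> 'b set set" where
  "graph_edges X = {{u, v} | u v. u \<in> X \<and> v \<in> X \<and> u \<noteq> v}"

definition graph_connected :: "'b set \<Rightarrow> 'b set set \<Rightarrow> bool" where
  "graph_connected X E \<longleftrightarrow>
     (\<forall>u\<in>X. \<forall>v\<in>X. (u, v) \<in> {(a, b). {a, b} \<in> E}\<^sup>*)"

definition spanning_tree :: "'b set \<Rightarrow> 'b set set \<Rightarrow> bool" where
  "spanning_tree X E \<longleftrightarrow> E \<subseteq> graph_edges X \<and> graph_connected X E \<and>
     (\<forall>e\<in>E. \<not> graph_connected X (E - {e}))"

text \<open>Total length of a minimal spanning tree, Euclidean edge lengths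
  (the diameter of the edge {u,v} is dist u v).\<close>
definition MST_len :: "'b::euclidean_space set \<Rightarrow> real" where
  "MST_len X = Min {(\<Sum>e\<in>E. diameter e) | E. spanning_tree X E}"

definition poisson_pp :: "'a measure \<Rightarrow> ('a \<Rightarrow> 'b::euclidean_space set) \<Rightarrow> bool" where
  "poisson_pp M P \<longleftrightarrow> prob_space M \<and>
     (\<forall>\<omega>\<in>space M. \<forall>A. bounded A \<longrightarrow> finite (P \<omega> \<inter> A)) \<and>
     (\<forall>A. A \<in> sets lborel \<and> bounded A \<longrightarrow>
        (\<lambda>\<omega>. card (P \<omega> \<inter> A)) \<in> measurable M (count_space UNIV) \<and>
        (\<forall>k::nat. measure M {\<omega> \<in> space M. card (P \<omega> \<inter> A) = k} =
           (measure lborel A) ^ k / fact k * exp (- measure lborel A))) \<and>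
     (\<forall>(I::nat set) (A::nat \<Rightarrow> 'b set). finite I \<and> (\<forall>i\<in>I. A i \<in> sets lborel \<and> bounded (A i))
        \<and> disjoint_family_on A I \<longrightarrow>
        prob_space.indep_vars M (\<lambda>_. count_space UNIV) (\<lambda>i \<omega>. card (P \<omega> \<inter> A i)) I)"

end

theory Submission
  imports Defs
begin

definition wt :: "'b::euclidean_space set set \<Rightarrow> real" where
  "wt E = (\<Sum>e\<in>E. diameter e)"

definition grel :: "'b set set \<Rightarrow> ('b \<times> 'b) set" where
  "grel E = {(a, b). {a, b} \<in> E}"

lemma diameter2: "diameter {u, v::'b::euclidean_space} = dist u v"
proof (rule antisym)
  show "diameter {u, v} \<le> dist u v"
    by (rule diameter_le) (auto simp: dist_norm norm_minus_commute)
  show "dist u v \<le> diameter {u, v}"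
    by (rule diameter_bounded_bound) auto
qed

lemma diameter_edge_nonneg: "finite e \<Longrightarrow> 0 \<le> diameter (e::'b::euclidean_space set)"
  by (simp add: diameter_ge_0 finite_imp_bounded)

lemma graph_edges_sub: "graph_edges X \<subseteq> Pow X"
  unfolding graph_edges_def by auto

lemma finite_graph_edges: "finite X \<Longrightarrow> finite (graph_edges X)"
  by (meson finite_Pow_iff graph_edges_sub rev_finite_subset)

lemma edge_finite: "e \<in> graph_edges X \<Longrightarrow> finite e"
  unfolding graph_edges_def by auto

lemma wt_nonneg: "E \<subseteq> graph_edges X \<Longrightarrow> 0 \<le> wt (E::'b::euclidean_space set set)"
  unfolding wt_def by (intro sum_nonneg diameter_edge_nonneg) (auto dest: edge_finite)

lemma wt_mono: "E \<subseteq> F \<Longrightarrow> F \<subseteq> graph_edges X \<Longrightarrow> finite X \<Longrightarrow> wt E \<le> wt (F::'b::euclidean_space set set)"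
  unfolding wt_def
  by (intro sum_mono2) (auto intro: diameter_edge_nonneg dest: edge_finite
      intro: finite_subset[OF _ finite_graph_edges])

lemma graph_connected_alt: "graph_connected X E \<longleftrightarrow> (\<forall>u\<in>X. \<forall>v\<in>X. (u, v) \<in> (grel E)\<^sup>*)"
  unfolding graph_connected_def grel_def by simp

lemma grel_sym: "(a, b) \<in> (grel E)\<^sup>* \<Longrightarrow> (b, a) \<in> (grel E)\<^sup>*"
proof -
  have "(grel E)\<inverse> = grel E" unfolding grel_def by (auto simp: insert_commute)
  moreover assume "(a, b) \<in> (grel E)\<^sup>*"
  ultimately show ?thesis by (metis rtrancl_converseI)
qed

lemma grel_mono: "E \<subseteq> F \<Longrightarrow> (a, b) \<in> (grel E)\<^sup>* \<Longrightarrow> (a, b) \<in> (grel F)\<^sup>*"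
  unfolding grel_def by (erule rtrancl_mono[THEN subsetD, rotated]) auto

lemma grel_edge: "{a, b} \<in> E \<Longrightarrow> (a, b) \<in> (grel E)\<^sup>*"
  unfolding grel_def by auto

lemma connected_via_center:
  assumes "c \<in> X" "\<And>u. u \<in> X \<Longrightarrow> (u, c) \<in> (grel E)\<^sup>*"
  shows "graph_connected X E"
  unfolding graph_connected_alt
  by (meson assms grel_sym rtrancl_trans)

lemma complete_connected: "graph_connected X (graph_edges X)"
  unfolding graph_connected_alt
proof (intro ballI)
  fix u v assume "u \<in> X" "v \<in> X"
  then show "(u, v) \<in> (grel (graph_edges X))\<^sup>*"
    by (cases "u = v") (auto intro!: grel_edge simp: graph_edges_def)
qed

lemma exists_spanning_tree_below:
  assumes "finite X" "E \<subseteq> graph_edges X" "graph_connected X E"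
  shows "\<exists>T \<subseteq> E. spanning_tree X T"
  using assms(2,3)
proof (induction "card E" arbitrary: E rule: less_induct)
  case less
  have fE: "finite E" using less.prems finite_graph_edges[OF assms(1)] finite_subset by blast
  show ?case
  proof (cases "\<forall>e\<in>E. \<not> graph_connected X (E - {e})")
    case True then show ?thesis using less.prems unfolding spanning_tree_def by blast
  next
    case False
    then obtain e where e: "e \<in> E" "graph_connected X (E - {e})" by blast
    have "card (E - {e}) < card E" using card_Diff1_less[OF fE e(1)] .
    from less.hyps[OF this _ e(2)] less.prems obtain T where "T \<subseteq> E - {e}" "spanning_tree X T" by blast
    then show ?thesis by blast
  qed
qed

lemma spanning_tree_finite: "finite X \<Longrightarrow> spanning_tree X T \<Longrightarrow> finite T"
  unfolding spanning_tree_def using finite_graph_edges finite_subset by blast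

lemma MST_set_finite_nonempty:
  assumes "finite X"
  shows "finite {wt E | E. spanning_tree X E}" "{wt E | E. spanning_tree X E} \<noteq> {}"
proof -
  have "{E. spanning_tree X E} \<subseteq> Pow (graph_edges X)" unfolding spanning_tree_def by auto
  then have "finite {E. spanning_tree X E}" using finite_graph_edges[OF assms]
    by (meson finite_Pow_iff finite_subset)
  then show "finite {wt E | E. spanning_tree X E}"
    using finite_image_set by blast
  show "{wt E | E. spanning_tree X E} \<noteq> {}"
    using exists_spanning_tree_below[OF assms order_refl complete_connected] by blast
qed

lemma MST_len_wt: "MST_len X = Min {wt E | E. spanning_tree X E}"
  unfolding MST_len_def wt_def by simp

lemma MST_attained:
  assumes "finite X"
  shows "\<exists>T. spanning_tree X T \<and> MST_len X = wt T"
proof -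
  have "MST_len X \<in> {wt E | E. spanning_tree X E}"
    unfolding MST_len_wt using MST_set_finite_nonempty[OF assms] by (rule Min_in)
  then show ?thesis by auto
qed

lemma MST_le:
  assumes "finite X" "E \<subseteq> graph_edges X" "graph_connected X E"
  shows "MST_len X \<le> wt E"
proof -
  obtain T where T: "T \<subseteq> E" "spanning_tree X T"
    using exists_spanning_tree_below[OF assms] by blast
  have "MST_len X \<le> wt T"
    unfolding MST_len_wt using MST_set_finite_nonempty[OF assms(1)] T by (intro Min_le) auto
  also have "\<dots> \<le> wt E" using wt_mono[OF T(1) assms(2,1)] .
  finally show ?thesis .
qed

lemma MST_nonneg: "finite X \<Longrightarrow> 0 \<le> MST_len X"
  using MST_attained wt_nonneg unfolding spanning_tree_def by metis

lemma MST_empty: "MST_len ({}::'b::euclidean_space set) = 0"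
proof -
  have "MST_len ({}::'b set) \<le> wt ({}::'b set set)" using MST_le[of "{}" "{}"] by (auto simp: graph_connected_def)
  then show ?thesis using MST_nonneg[of "{}::'b set"] by (simp add: wt_def)
qed

lemma split_reach:
  assumes "(y, u) \<in> (grel E)\<^sup>*" "{y, z} \<in> E"
  shows "(y, u) \<in> (grel (E - {{y, z}}))\<^sup>* \<or> (z, u) \<in> (grel (E - {{y, z}}))\<^sup>*"
  using assms(1)
proof (induction rule: rtrancl_induct)
  case base then show ?case by simp
next
  case (step v w)
  then have vw: "{v, w} \<in> E" unfolding grel_def by simp
  show ?case
  proof (cases "{v, w} = {y, z}")
    case True
    then have "w = y \<or> w = z" by (auto simp: doubleton_eq_iff)
    then show ?thesis by auto
  next
    case False
    then have "(v, w) \<in> grel (E - {{y, z}})" using vw unfolding grel_def by simp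
    then show ?thesis using step.IH by (meson rtrancl.rtrancl_into_rtrancl)
  qed
qed

lemma crossing_edge:
  assumes "(u, v) \<in> (grel E)\<^sup>*" "u \<in> S" "v \<notin> S"
  shows "\<exists>a b. {a, b} \<in> E \<and> a \<in> S \<and> b \<notin> S"
  using assms
proof (induction rule: rtrancl_induct)
  case base then show ?case by simp
next
  case (step v w)
  then have vw: "{v, w} \<in> E" unfolding grel_def by simp
  show ?case
  proof (cases "v \<in> S")
    case True then show ?thesis using vw step.prems by blast
  next
    case False then show ?thesis using step.IH step.prems by blast
  qed
qed

lemma tree_edge_ne:
  "spanning_tree X T \<Longrightarrow> {y, z} \<in> T \<Longrightarrow> y \<noteq> z \<and> y \<in> X \<and> z \<in> X"
  unfolding spanning_tree_def graph_edges_def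
  by (auto simp: doubleton_eq_iff)

lemma in_graph_edges: "u \<in> X \<Longrightarrow> v \<in> X \<Longrightarrow> u \<noteq> v \<Longrightarrow> {u, v} \<in> graph_edges X"
  unfolding graph_edges_def by blast

lemma grel_mono_sym: "E \<subseteq> F \<Longrightarrow> (a, b) \<in> (grel E)\<^sup>* \<Longrightarrow> (b, a) \<in> (grel F)\<^sup>*"
  using grel_mono grel_sym by metis

lemma no_lune:
  fixes X :: "'b::euclidean_space set"
  assumes fin: "finite X" and T: "spanning_tree X T" "MST_len X = wt T"
    and e: "{y, z} \<in> T" and w: "w \<in> X"
  shows "\<not> (dist w y < dist y z \<and> dist w z < dist y z)"
proof
  assume lune: "dist w y < dist y z \<and> dist w z < dist y z"
  have yz: "y \<noteq> z" "y \<in> X" "z \<in> X" using tree_edge_ne[OF T(1) e] by auto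
  have wy: "w \<noteq> y" using lune by auto
  have wz: "w \<noteq> z" using lune by (auto simp: dist_commute)
  let ?R = "T - {{y, z}}"
  have conn: "graph_connected X T" "T \<subseteq> graph_edges X" using T(1) unfolding spanning_tree_def by auto
  have sp: "\<And>u. u \<in> X \<Longrightarrow> (y, u) \<in> (grel ?R)\<^sup>* \<or> (z, u) \<in> (grel ?R)\<^sup>*"
  proof -
    fix u assume u: "u \<in> X"
    have "(y, u) \<in> (grel T)\<^sup>*" using conn(1) yz(2) u unfolding graph_connected_alt by blast
    from split_reach[OF this e] show "(y, u) \<in> (grel ?R)\<^sup>* \<or> (z, u) \<in> (grel ?R)\<^sup>*" .
  qed
  have fT: "finite T" using spanning_tree_finite[OF fin T(1)] .
  have dR: "wt ?R = wt T - dist y z"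
    unfolding wt_def using fT e by (simp add: sum_diff1 diameter2)
  have key: "\<exists>p q. {p, q} \<in> graph_edges X \<and> dist p q < dist y z \<and> graph_connected X (?R \<union> {{p, q}})"
  proof (cases "(y, w) \<in> (grel ?R)\<^sup>*")
    case True
    have c: "\<And>u. u \<in> X \<Longrightarrow> (u, y) \<in> (grel (?R \<union> {{w, z}}))\<^sup>*"
    proof -
      fix u assume u: "u \<in> X"
      have yw': "(y, w) \<in> (grel (?R \<union> {{w, z}}))\<^sup>*" by (rule grel_mono[OF _ True]) auto
      have wz': "(w, z) \<in> (grel (?R \<union> {{w, z}}))\<^sup>*" by (rule grel_edge) simp
      have yz': "(y, z) \<in> (grel (?R \<union> {{w, z}}))\<^sup>*" using yw' wz' by (rule rtrancl_trans)
      from sp[OF u] show "(u, y) \<in> (grel (?R \<union> {{w, z}}))\<^sup>*"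
      proof
        assume "(y, u) \<in> (grel ?R)\<^sup>*"
        then show ?thesis by (rule grel_mono_sym[rotated]) auto
      next
        assume "(z, u) \<in> (grel ?R)\<^sup>*"
        then have "(z, u) \<in> (grel (?R \<union> {{w, z}}))\<^sup>*" by (rule grel_mono[rotated]) auto
        then have "(y, u) \<in> (grel (?R \<union> {{w, z}}))\<^sup>*" using yz' by (rule rtrancl_trans[rotated])
        then show ?thesis by (rule grel_sym)
      qed
    qed
    have "{w, z} \<in> graph_edges X" using w yz(3) wz by (rule in_graph_edges)
    moreover have "graph_connected X (?R \<union> {{w, z}})" using connected_via_center[OF yz(2) c] .
    ultimately show ?thesis using lune by (intro exI[of _ w] exI[of _ z]) auto
  next
    case False
    then have zw: "(z, w) \<in> (grel ?R)\<^sup>*" using sp[OF w] by blast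
    have c: "\<And>u. u \<in> X \<Longrightarrow> (u, z) \<in> (grel (?R \<union> {{w, y}}))\<^sup>*"
    proof -
      fix u assume u: "u \<in> X"
      have zw': "(z, w) \<in> (grel (?R \<union> {{w, y}}))\<^sup>*" by (rule grel_mono[OF _ zw]) auto
      have wy': "(w, y) \<in> (grel (?R \<union> {{w, y}}))\<^sup>*" by (rule grel_edge) simp
      have zy': "(z, y) \<in> (grel (?R \<union> {{w, y}}))\<^sup>*" using zw' wy' by (rule rtrancl_trans)
      from sp[OF u] show "(u, z) \<in> (grel (?R \<union> {{w, y}}))\<^sup>*"
      proof
        assume "(z, u) \<in> (grel ?R)\<^sup>*"
        then show ?thesis by (rule grel_mono_sym[rotated]) auto
      next
        assume "(y, u) \<in> (grel ?R)\<^sup>*"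
        then have "(y, u) \<in> (grel (?R \<union> {{w, y}}))\<^sup>*" by (rule grel_mono[rotated]) auto
        then have "(z, u) \<in> (grel (?R \<union> {{w, y}}))\<^sup>*" using zy' by (rule rtrancl_trans[rotated])
        then show ?thesis by (rule grel_sym)
      qed
    qed
    have "{w, y} \<in> graph_edges X" using w yz(2) wy by (rule in_graph_edges)
    moreover have "graph_connected X (?R \<union> {{w, y}})" using connected_via_center[OF yz(3) c] .
    moreover have "dist w y < dist y z" using lune by simp
    ultimately show ?thesis by (intro exI[of _ w] exI[of _ y]) auto
  qed
  then obtain p q where pq: "{p, q} \<in> graph_edges X" "dist p q < dist y z"
    "graph_connected X (?R \<union> {{p, q}})" by blast
  have sub: "?R \<union> {{p, q}} \<subseteq> graph_edges X" using conn pq by auto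
  have "MST_len X \<le> wt (?R \<union> {{p, q}})" using MST_le[OF fin sub pq(3)] .
  also have "\<dots> \<le> wt ?R + diameter {p, q}"
  proof (cases "{p, q} \<in> ?R")
    case True
    then have "?R \<union> {{p, q}} = ?R" by blast
    then show ?thesis by (simp add: diameter2)
  next
    case False
    have "finite ?R" using fT by simp
    then show ?thesis using False unfolding wt_def by simp
  qed
  also have "\<dots> < wt T" using dR pq(2) by (simp add: diameter2)
  finally show False using T(2) by simp
qed

lemma graph_edges_mono: "A \<subseteq> B \<Longrightarrow> graph_edges A \<subseteq> graph_edges B"
  unfolding graph_edges_def by blast

lemma wt_Un_image_le:
  fixes E :: "'b::euclidean_space set set" and D :: real
  assumes fE: "finite E" and fA: "finite A" and E: "\<And>e. e \<in> E \<Longrightarrow> finite e"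
    and D: "\<And>y. y \<in> A \<Longrightarrow> dist y c \<le> D"
  shows "wt (E \<union> (\<lambda>y. {y, c}) ` A) \<le> wt E + card A * D"
proof -
  let ?F = "(\<lambda>y. {y, c}) ` A"
  have fF: "finite ?F" using fA by simp
  have nn: "\<And>e. e \<in> E \<union> ?F \<Longrightarrow> 0 \<le> diameter e" using E by (auto intro: diameter_edge_nonneg)
  have "wt (E \<union> ?F) = wt E + wt ?F - wt (E \<inter> ?F)"
    unfolding wt_def using fE fF by (simp add: sum_Un)
  also have "wt (E \<inter> ?F) \<ge> 0" unfolding wt_def using nn by (intro sum_nonneg) auto
  then have "wt E + wt ?F - wt (E \<inter> ?F) \<le> wt E + wt ?F" by simp
  also have "wt ?F \<le> (\<Sum>y\<in>A. diameter {y, c})"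
    unfolding wt_def using sum_image_le[of A diameter "\<lambda>y. {y, c}"] fA
    by (simp add: o_def diameter2)
  also have "\<dots> \<le> (\<Sum>y\<in>A. D)" using D by (intro sum_mono) (simp add: diameter2)
  also have "\<dots> = card A * D" by simp
  finally show ?thesis by simp
qed

lemma MST_up:
  fixes X :: "'b::euclidean_space set" and D :: real
  assumes fin: "finite X" and c: "c \<in> X" and cZ: "X - C \<noteq> {} \<Longrightarrow> c \<in> X - C"
    and D: "\<And>y. y \<in> X \<inter> C \<Longrightarrow> dist y c \<le> D" and D0: "0 \<le> D"
  shows "MST_len X \<le> MST_len (X - C) + card (X \<inter> C) * D"
proof -
  have finZ: "finite (X - C)" using fin by simp
  obtain TZ where TZ: "spanning_tree (X - C) TZ" "MST_len (X - C) = wt TZ"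
    using MST_attained[OF finZ] by blast
  let ?A = "(X \<inter> C) - {c}"
  let ?E = "TZ \<union> (\<lambda>y. {y, c}) ` ?A"
  have TZsub: "TZ \<subseteq> graph_edges X"
    using TZ(1) graph_edges_mono[of "X - C" X] unfolding spanning_tree_def by blast
  have Esub: "?E \<subseteq> graph_edges X"
  proof
    fix e assume "e \<in> ?E"
    then show "e \<in> graph_edges X"
    proof
      assume "e \<in> TZ" then show ?thesis using TZsub by blast
    next
      assume "e \<in> (\<lambda>y. {y, c}) ` ?A"
      then obtain y where "y \<in> ?A" "e = {y, c}" by blast
      then show ?thesis using c in_graph_edges[of y X c] by auto
    qed
  qed
  have conn: "graph_connected X ?E"
  proof (rule connected_via_center[OF c])
    fix u assume u: "u \<in> X"
    show "(u, c) \<in> (grel ?E)\<^sup>*"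
    proof (cases "u \<in> C")
      case True
      show ?thesis
      proof (cases "u = c")
        case False
        then have "{u, c} \<in> ?E" using u True by blast
        then show ?thesis by (rule grel_edge)
      qed simp
    next
      case False
      then have uZ: "u \<in> X - C" using u by blast
      then have cZ': "c \<in> X - C" using cZ by blast
      have "(u, c) \<in> (grel TZ)\<^sup>*" using TZ(1) uZ cZ' unfolding spanning_tree_def graph_connected_alt by blast
      then show ?thesis by (rule grel_mono[rotated]) auto
    qed
  qed
  have "MST_len X \<le> wt ?E" using MST_le[OF fin Esub conn] .
  also have "\<dots> \<le> wt TZ + card ?A * D"
  proof (rule wt_Un_image_le)
    show "finite TZ" using spanning_tree_finite[OF finZ TZ(1)] .
    show "finite ?A" using fin by simp
    show "\<And>e. e \<in> TZ \<Longrightarrow> finite e" using TZ(1) edge_finite unfolding spanning_tree_def by blast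
    show "\<And>y. y \<in> ?A \<Longrightarrow> dist y c \<le> D" using D by blast
  qed
  also have "card ?A * D \<le> card (X \<inter> C) * D"
    using D0 fin by (intro mult_right_mono) (auto intro: card_mono)
  finally show ?thesis using TZ(2) by simp
qed

lemma MST_down:
  fixes X :: "'b::euclidean_space set" and D :: real
  assumes fin: "finite X" and T: "spanning_tree X T"
    and S: "S = {z \<in> X - C. \<exists>y \<in> X \<inter> C. {y, z} \<in> T}" and z0: "z0 \<in> S"
    and D: "\<And>z. z \<in> S \<Longrightarrow> dist z z0 \<le> D" and D0: "0 \<le> D"
  shows "MST_len (X - C) \<le> wt T + card S * D"
proof -
  let ?Z = "X - C"
  have finZ: "finite ?Z" using fin by simp
  let ?T0 = "{e \<in> T. e \<subseteq> ?Z}"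
  let ?A = "S - {z0}"
  let ?E = "?T0 \<union> (\<lambda>z. {z, z0}) ` ?A"
  have Tsub: "T \<subseteq> graph_edges X" using T unfolding spanning_tree_def by blast
  have z0Z: "z0 \<in> ?Z" using z0 S by blast
  have Esub: "?E \<subseteq> graph_edges ?Z"
  proof
    fix e assume "e \<in> ?E"
    then show "e \<in> graph_edges ?Z"
    proof
      assume e: "e \<in> ?T0"
      then obtain u v where "e = {u, v}" "u \<noteq> v" using Tsub unfolding graph_edges_def by blast
      then show ?thesis using e in_graph_edges[of u ?Z v] by auto
    next
      assume "e \<in> (\<lambda>z. {z, z0}) ` ?A"
      then obtain z where "z \<in> ?A" "e = {z, z0}" by blast
      then show ?thesis using z0Z S in_graph_edges[of z ?Z z0] by auto
    qed
  qed
  define f where "f u = (if u \<in> C then z0 else u)" for u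
  have Sz: "\<And>z. z \<in> S \<Longrightarrow> (z, z0) \<in> (grel ?E)\<^sup>*"
  proof -
    fix z assume z: "z \<in> S"
    show "(z, z0) \<in> (grel ?E)\<^sup>*"
    proof (cases "z = z0")
      case False
      then have "{z, z0} \<in> ?E" using z by blast
      then show ?thesis by (rule grel_edge)
    qed simp
  qed
  have fstep: "(f u, f v) \<in> (grel ?E)\<^sup>*" if "(u, v) \<in> (grel T)\<^sup>*" for u v
    using that
  proof (induction rule: rtrancl_induct)
    case base then show ?case by simp
  next
    case (step v w)
    have vw: "{v, w} \<in> T" using step.hyps(2) unfolding grel_def by simp
    have vX: "v \<in> X" and wX: "w \<in> X" using tree_edge_ne[OF T vw] by auto
    have "(f v, f w) \<in> (grel ?E)\<^sup>*"
    proof (cases "v \<in> C")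
      case vC: True
      show ?thesis
      proof (cases "w \<in> C")
        case True then show ?thesis using vC unfolding f_def by simp
      next
        case False
        have "w \<in> S" using S vw vC False vX wX by (auto intro!: bexI[of _ v])
        then show ?thesis using vC False Sz unfolding f_def by (simp add: grel_sym)
      qed
    next
      case vC: False
      show ?thesis
      proof (cases "w \<in> C")
        case True
        then have "v \<in> S" using S vw vC vX wX by (auto intro!: bexI[of _ w] simp: insert_commute)
        then show ?thesis using vC True Sz unfolding f_def by simp
      next
        case False
        then have "{v, w} \<in> ?E" using vw vC vX wX by blast
        then show ?thesis using vC False unfolding f_def by (simp add: grel_edge)
      qed
    qed
    then show ?case using step.IH by (rule rtrancl_trans[rotated])
  qed
  have conn: "graph_connected ?Z ?E"
    unfolding graph_connected_alt
  proof (intro ballI)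
    fix u v assume u: "u \<in> ?Z" and v: "v \<in> ?Z"
    have "(u, v) \<in> (grel T)\<^sup>*" using T u v unfolding spanning_tree_def graph_connected_alt by blast
    from fstep[OF this] show "(u, v) \<in> (grel ?E)\<^sup>*" using u v unfolding f_def by simp
  qed
  have fT: "finite T" using spanning_tree_finite[OF fin T] .
  have "MST_len ?Z \<le> wt ?E" using MST_le[OF finZ Esub conn] .
  also have "\<dots> \<le> wt ?T0 + card ?A * D"
  proof (rule wt_Un_image_le)
    show "finite ?T0" using fT by simp
    show "finite ?A" using S fin by simp
    show "\<And>e. e \<in> ?T0 \<Longrightarrow> finite e" using Tsub edge_finite by blast
    show "\<And>y. y \<in> ?A \<Longrightarrow> dist y z0 \<le> D" using D by blast
  qed
  also have "wt ?T0 \<le> wt T" using wt_mono[of ?T0 T X] Tsub fin by blast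
  also have "card ?A * D \<le> card S * D"
    using D0 fin S by (intro mult_right_mono) (auto intro: card_mono)
  finally show ?thesis by simp
qed

lemma mem_cube: "v \<in> cube x r \<longleftrightarrow> (\<forall>i\<in>Basis. \<bar>v \<bullet> i - x \<bullet> i\<bar> \<le> r)"
  unfolding cube_def mem_box by (auto simp: inner_simps abs_le_iff algebra_simps)

lemma cube_mono: "r \<le> s \<Longrightarrow> cube x r \<subseteq> cube x s"
  unfolding mem_cube subset_iff by force

lemma dist_le_l1: "dist u (v::'b::euclidean_space) \<le> (\<Sum>i\<in>Basis. \<bar>u \<bullet> i - v \<bullet> i\<bar>)"
  unfolding dist_norm using norm_le_l1[of "u - v"] by (simp add: inner_simps)

lemma dist_cube: "u \<in> cube x r \<Longrightarrow> v \<in> cube x r \<Longrightarrow> dist u (v::'b::euclidean_space) \<le> 2 * r * DIM('b)"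
proof -
  assume u: "u \<in> cube x r" and v: "v \<in> cube x r"
  have "dist u v \<le> (\<Sum>i\<in>Basis. \<bar>u \<bullet> i - v \<bullet> i\<bar>)" by (rule dist_le_l1)
  also have "\<dots> \<le> (\<Sum>i\<in>(Basis::'b set). 2 * r)"
  proof (rule sum_mono)
    fix i :: 'b assume i: "i \<in> Basis"
    have "\<bar>u \<bullet> i - x \<bullet> i\<bar> \<le> r" "\<bar>v \<bullet> i - x \<bullet> i\<bar> \<le> r" using u v i unfolding mem_cube by auto
    then show "\<bar>u \<bullet> i - v \<bullet> i\<bar> \<le> 2 * r" by linarith
  qed
  also have "\<dots> = 2 * r * DIM('b)" by simp
  finally show ?thesis .
qed

lemma cube_near: "y \<in> cube x r \<Longrightarrow> dist y z \<le> L \<Longrightarrow> z \<in> cube x (r + L)"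
proof -
  assume y: "y \<in> cube x r" and d: "dist y z \<le> L"
  show ?thesis unfolding mem_cube
  proof
    fix i :: 'a assume i: "i \<in> Basis"
    have "\<bar>(z - y) \<bullet> i\<bar> \<le> norm (z - y)" using Basis_le_norm[OF i] .
    also have "\<dots> \<le> L" using d by (simp add: dist_norm norm_minus_commute)
    finally have "\<bar>z \<bullet> i - y \<bullet> i\<bar> \<le> L" by (simp add: inner_simps)
    moreover have "\<bar>y \<bullet> i - x \<bullet> i\<bar> \<le> r" using y i unfolding mem_cube by auto
    ultimately show "\<bar>z \<bullet> i - x \<bullet> i\<bar> \<le> r + L" by linarith
  qed
qed

lemma det_bound:
  fixes X :: "'b::euclidean_space set" and a :: real
  assumes fin: "finite X" and a0: "0 \<le> a"
  shows "\<exists>L\<ge>0. \<bar>MST_len X - MST_len (X - cube x a)\<bar>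
              \<le> card (X \<inter> cube x (a + L)) * (2 * L + 2 * a * DIM('b)) \<and>
           (L = 0 \<or> (\<exists>y\<in>X \<inter> cube x a. \<exists>z\<in>X. dist y z = L \<and> (\<forall>w\<in>X. \<not> (dist w y < L \<and> dist w z < L))))"
proof -
  define C where "C = cube x a"
  define d where "d = real DIM('b)"
  obtain T where T: "spanning_tree X T" "MST_len X = wt T" using MST_attained[OF fin] by blast
  have fT: "finite T" using spanning_tree_finite[OF fin T(1)] .
  define Ls where "Ls = {dist y z | y z. y \<in> X \<inter> C \<and> z \<in> X - C \<and> {y, z} \<in> T}"
  have fLs: "finite Ls"
  proof -
    have "Ls \<subseteq> (\<lambda>(y, z). dist y z) ` ((X \<inter> C) \<times> (X - C))" unfolding Ls_def by auto
    then show ?thesis using fin by (meson finite_Diff finite_Int finite_SigmaI finite_imageI finite_subset)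
  qed
  define L where "L = Max (insert 0 Ls)"
  have L0: "0 \<le> L" unfolding L_def using fLs by simp
  have Lge: "\<And>y z. y \<in> X \<inter> C \<Longrightarrow> z \<in> X - C \<Longrightarrow> {y, z} \<in> T \<Longrightarrow> dist y z \<le> L"
    unfolding L_def Ls_def using fLs by (intro Max_ge) (auto simp: Ls_def)
  have second: "L = 0 \<or> (\<exists>y\<in>X \<inter> cube x a. \<exists>z\<in>X. dist y z = L \<and> (\<forall>w\<in>X. \<not> (dist w y < L \<and> dist w z < L)))"
  proof -
    have "L \<in> insert 0 Ls" unfolding L_def using fLs by (intro Max_in) auto
    then show ?thesis
    proof
      assume "L \<in> Ls"
      then obtain y z where yz: "y \<in> X \<inter> C" "z \<in> X - C" "{y, z} \<in> T" "L = dist y z" unfolding Ls_def by blast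
      have "\<forall>w\<in>X. \<not> (dist w y < L \<and> dist w z < L)"
        using no_lune[OF fin T(1) T(2) yz(3)] yz(4) by blast
      then show ?thesis using yz C_def by blast
    qed simp
  qed
  have a2: "0 \<le> 2 * a * d" using a0 unfolding d_def by simp
  have cardY: "card (X \<inter> C) \<le> card (X \<inter> cube x (a + L))"
    using fin cube_mono[of a "a + L" x] L0 unfolding C_def by (intro card_mono) auto
  let ?N = "card (X \<inter> cube x (a + L))"
  have first: "\<bar>MST_len X - MST_len (X - C)\<bar> \<le> ?N * (2 * L + 2 * a * d)"
  proof (cases "X \<inter> C = {}")
    case True
    then have "X - C = X" by blast
    then show ?thesis using L0 a2 by simp
  next
    case Yne: False
    show ?thesis
    proof (cases "X - C = {}")
      case True
      obtain y0 where y0: "y0 \<in> X \<inter> C" using Yne by blast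
      have "MST_len X \<le> MST_len (X - C) + card (X \<inter> C) * (2 * a * d)"
      proof (rule MST_up[OF fin])
        show "y0 \<in> X" using y0 by blast
        show "X - C \<noteq> {} \<Longrightarrow> y0 \<in> X - C" using True by blast
        show "\<And>y. y \<in> X \<inter> C \<Longrightarrow> dist y y0 \<le> 2 * a * d"
          using y0 dist_cube unfolding C_def d_def by blast
      qed (rule a2)
      also have "\<dots> \<le> 0 + ?N * (2 * L + 2 * a * d)"
      proof -
        have "MST_len (X - C) = 0" using True MST_empty by (metis)
        moreover have "card (X \<inter> C) * (2 * a * d) \<le> ?N * (2 * L + 2 * a * d)"
          using cardY L0 a2 by (intro mult_mono) auto
        ultimately show ?thesis by simp
      qed
      finally have u: "MST_len X \<le> ?N * (2 * L + 2 * a * d)" by simp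
      have "0 \<le> MST_len X" using MST_nonneg[OF fin] .
      moreover have "MST_len (X - C) = 0" using True MST_empty by metis
      ultimately show ?thesis using u by simp
    next
      case Zne: False
      obtain y1 z1 where y1z1: "y1 \<in> X \<inter> C" "z1 \<in> X - C" using Yne Zne by blast
      have "(y1, z1) \<in> (grel T)\<^sup>*" using T(1) y1z1 unfolding spanning_tree_def graph_connected_alt by blast
      from crossing_edge[OF this, of C] y1z1 obtain p b where pb: "{p, b} \<in> T" "p \<in> C" "b \<notin> C" by blast
      have pbX: "p \<in> X" "b \<in> X" using tree_edge_ne[OF T(1) pb(1)] by auto
      have dpb: "dist p b \<le> L" using Lge pb pbX by blast
      have up: "MST_len X \<le> MST_len (X - C) + card (X \<inter> C) * (2 * a * d + L)"
      proof (rule MST_up[OF fin])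
        show "b \<in> X" by (rule pbX)
        show "X - C \<noteq> {} \<Longrightarrow> b \<in> X - C" using pbX pb by blast
        show "0 \<le> 2 * a * d + L" using a2 L0 by simp
        fix y assume y: "y \<in> X \<inter> C"
        have "dist y p \<le> 2 * a * d" using dist_cube y pb(2) unfolding C_def d_def by blast
        then show "dist y b \<le> 2 * a * d + L" using dist_triangle[of y b p] dpb by linarith
      qed
      define S where "S = {z \<in> X - C. \<exists>y \<in> X \<inter> C. {y, z} \<in> T}"
      have bS: "b \<in> S" unfolding S_def using pb pbX by blast
      have down: "MST_len (X - C) \<le> wt T + card S * (2 * L + 2 * a * d)"
      proof (rule MST_down[OF fin T(1) S_def bS])
        show "0 \<le> 2 * L + 2 * a * d" using a2 L0 by simp
        fix z assume "z \<in> S"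
        then obtain y where y: "y \<in> X \<inter> C" "z \<in> X - C" "{y, z} \<in> T" unfolding S_def by blast
        have "dist y z \<le> L" using Lge y by blast
        moreover have "dist y p \<le> 2 * a * d" using dist_cube y pb(2) unfolding C_def d_def by blast
        ultimately show "dist z b \<le> 2 * L + 2 * a * d"
          using dist_triangle[of z b y] dist_triangle[of y b p] dpb by (simp add: dist_commute)
      qed
      have cardS: "card S \<le> ?N"
      proof (intro card_mono)
        show "finite (X \<inter> cube x (a + L))" using fin by simp
        show "S \<subseteq> X \<inter> cube x (a + L)"
        proof
          fix z assume "z \<in> S"
          then obtain y where y: "y \<in> X \<inter> C" "z \<in> X - C" "{y, z} \<in> T" unfolding S_def by blast
          have "dist y z \<le> L" using Lge y by blast
          then show "z \<in> X \<inter> cube x (a + L)" using cube_near[of y x a z L] y unfolding C_def by blast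
        qed
      qed
      have e1: "card (X \<inter> C) * (2 * a * d + L) \<le> ?N * (2 * L + 2 * a * d)"
        using cardY a2 L0 by (intro mult_mono) auto
      have e2: "card S * (2 * L + 2 * a * d) \<le> ?N * (2 * L + 2 * a * d)"
        using cardS a2 L0 by (intro mult_right_mono) auto
      show ?thesis using up down e1 e2 T(2) by linarith
    qed
  qed
  show ?thesis using first second L0 unfolding C_def d_def by blast
qed

definition cell :: "real \<Rightarrow> ('b \<Rightarrow> int) \<Rightarrow> 'b::euclidean_space set" where
  "cell k j = cbox (\<Sum>i\<in>Basis. (of_int (j i) * k) *\<^sub>R i) (\<Sum>i\<in>Basis. (of_int (j i + 1) * k) *\<^sub>R i)"

lemma mem_cell: "v \<in> cell k j \<longleftrightarrow> (\<forall>i\<in>Basis. of_int (j i) * k \<le> v \<bullet> i \<and> v \<bullet> i \<le> of_int (j i + 1) * k)"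
  unfolding cell_def mem_box by (simp add: inner_sum_left inner_Basis if_distrib sum.delta cong: if_cong)

lemma dist_center: "v \<in> cube c r \<Longrightarrow> dist v (c::'b::euclidean_space) \<le> 2 * r * DIM('b)"
proof -
  assume v: "v \<in> cube c r"
  then have "r \<ge> 0" unfolding mem_cube by (meson abs_ge_zero nonempty_Basis ex_in_conv order_trans)
  then have "c \<in> cube c r" unfolding mem_cube by simp
  then show ?thesis using dist_cube v by blast
qed

lemma geo:
  fixes y z x :: "'b::euclidean_space" and k a a0 n :: real and Q :: "'b set"
  defines "d \<equiv> real DIM('b)"
  assumes k: "1 \<le> k" and y: "y \<in> cube 0 n" "y \<in> cube x a" and aa: "a \<le> a0" and z: "z \<in> cube 0 n"
    and l: "12 * d * k \<le> dist y z"
    and lune: "\<forall>w\<in>Q \<inter> cube 0 n. \<not> (dist w y < dist y z \<and> dist w z < dist y z)"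
  shows "\<exists>j. (\<forall>i\<in>Basis. j i \<in> {\<lceil>(x \<bullet> i - a0 - 7 * d * k) / k\<rceil> .. \<lfloor>(x \<bullet> i + a0 + 7 * d * k) / k\<rfloor>})
             \<and> cell k j \<subseteq> cube 0 n \<and> Q \<inter> cell k j = {}"
proof -
  define ell where "ell = dist y z"
  have d1: "1 \<le> d" unfolding d_def using DIM_positive[where 'a='b] by linarith
  have kpos: "0 < k" using k by simp
  have dk: "0 < d * k" using d1 kpos by simp
  have lpos: "0 < ell" using l dk unfolding ell_def by linarith
  have lmax: "ell \<le> 2 * n * d" using dist_cube[OF y(1) z] unfolding ell_def d_def by simp
  have kn: "2 * k \<le> n"
  proof -
    have "12 * d * k \<le> 2 * n * d" using l lmax unfolding ell_def by linarith
    then have "d * (6 * k) \<le> d * n" by (simp add: algebra_simps)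
    then have "6 * k \<le> n" using d1 by (simp add: mult_le_cancel_left_pos)
    then show ?thesis using kpos by linarith
  qed
  define r where "r = 5 * d * k"
  have r0: "0 < r" unfolding r_def using d1 kpos by simp
  have rl: "r < ell" unfolding r_def using l dk unfolding ell_def by linarith
  define t where "t = r / ell"
  have t01: "0 \<le> t" "t \<le> 1" unfolding t_def using r0 rl lpos by auto
  define y' where "y' = y + t *\<^sub>R (z - y)"
  have dyy': "dist y y' = r"
    unfolding y'_def t_def dist_norm using lpos r0 by (simp add: ell_def dist_norm norm_minus_commute)
  have dy'z: "dist y' z = ell - r"
  proof -
    have "y' - z = (1 - t) *\<^sub>R (y - z)" unfolding y'_def by (simp add: algebra_simps)
    then have "dist y' z = (1 - t) * ell" using t01 unfolding ell_def by (simp add: dist_norm)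
    then show ?thesis unfolding t_def using lpos by (simp add: algebra_simps)
  qed
  have y'coord: "y' \<bullet> i = (1 - t) * (y \<bullet> i) + t * (z \<bullet> i)" for i
    unfolding y'_def by (simp add: inner_simps algebra_simps)
  have y'n: "\<bar>y' \<bullet> i\<bar> \<le> n" if i: "i \<in> Basis" for i
  proof -
    have "\<bar>y \<bullet> i\<bar> \<le> n" "\<bar>z \<bullet> i\<bar> \<le> n" using y(1) z i unfolding mem_cube by auto
    then have "\<bar>(1 - t) * (y \<bullet> i)\<bar> \<le> (1 - t) * n" "\<bar>t * (z \<bullet> i)\<bar> \<le> t * n"
      using t01 by (auto simp: abs_mult intro: mult_left_mono)
    moreover have "(1 - t) * n + t * n = n" by (simp add: algebra_simps)
    ultimately show ?thesis unfolding y'coord using abs_triangle_ineq[of "(1-t)*(y \<bullet> i)" "t*(z \<bullet> i)"] by linarith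
  qed
  have y'x: "\<bar>y' \<bullet> i - x \<bullet> i\<bar> \<le> a + r" if i: "i \<in> Basis" for i
  proof -
    have "\<bar>(y' - y) \<bullet> i\<bar> \<le> norm (y' - y)" using Basis_le_norm[OF i] .
    also have "\<dots> = r" using dyy' by (simp add: dist_norm norm_minus_commute)
    finally have "\<bar>y' \<bullet> i - y \<bullet> i\<bar> \<le> r" by (simp add: inner_simps)
    moreover have "\<bar>y \<bullet> i - x \<bullet> i\<bar> \<le> a" using y(2) i unfolding mem_cube by auto
    ultimately show ?thesis by linarith
  qed
  define lo where "lo i = (if y' \<bullet> i \<le> 0 then y' \<bullet> i else y' \<bullet> i - 2 * k)" for i
  define j where "j i = \<lceil>lo i / k\<rceil>" for i
  have jlo: "lo i \<le> of_int (j i) * k" "of_int (j i + 1) * k \<le> lo i + 2 * k" for i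
  proof -
    have "lo i / k \<le> of_int (j i)" "of_int (j i) < lo i / k + 1" unfolding j_def by linarith+
    then show "lo i \<le> of_int (j i) * k" "of_int (j i + 1) * k \<le> lo i + 2 * k"
      using kpos by (auto simp: field_simps)
  qed
  have loint: "-n \<le> lo i" "lo i + 2 * k \<le> n" "y' \<bullet> i - 2 * k \<le> lo i" "lo i + 2 * k \<le> y' \<bullet> i + 2 * k"
    if i: "i \<in> Basis" for i
    using y'n[OF i] kn kpos unfolding lo_def by auto
  have cellsub: "v \<in> cube 0 n \<and> v \<in> cube y' (2 * k)" if v: "v \<in> cell k j" for v
  proof -
    have "\<forall>i\<in>Basis. lo i \<le> v \<bullet> i \<and> v \<bullet> i \<le> lo i + 2 * k"
      using v jlo unfolding mem_cell by (meson order_trans)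
    then show ?thesis unfolding mem_cube
    proof (intro conjI ballI)
      fix i :: 'b assume i: "i \<in> Basis" and h: "\<forall>i\<in>Basis. lo i \<le> v \<bullet> i \<and> v \<bullet> i \<le> lo i + 2 * k"
      have "lo i \<le> v \<bullet> i" "v \<bullet> i \<le> lo i + 2 * k" using h i by auto
      then show "\<bar>v \<bullet> i - 0 \<bullet> i\<bar> \<le> n" "\<bar>v \<bullet> i - y' \<bullet> i\<bar> \<le> 2 * k" using loint[OF i] by auto
    qed
  qed
  have jJ: "j i \<in> {\<lceil>(x \<bullet> i - a0 - 7 * d * k) / k\<rceil> .. \<lfloor>(x \<bullet> i + a0 + 7 * d * k) / k\<rfloor>}" if i: "i \<in> Basis" for i
  proof -
    have A: "\<bar>of_int (j i) * k - x \<bullet> i\<bar> \<le> a0 + 7 * d * k"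
    proof -
      have e: "of_int (j i + 1) * k = of_int (j i) * k + k" by (simp add: algebra_simps)
      have "y' \<bullet> i - 2 * k \<le> of_int (j i) * k" "of_int (j i) * k \<le> y' \<bullet> i + 2 * k"
        using jlo[of i] loint[OF i] kpos e by linarith+
      moreover have "2 * k \<le> 2 * d * k" using d1 kpos by simp
      ultimately show ?thesis using y'x[OF i] aa unfolding r_def by (simp add: abs_le_iff)
    qed
    have "(x \<bullet> i - a0 - 7 * d * k) / k \<le> of_int (j i)" "of_int (j i) \<le> (x \<bullet> i + a0 + 7 * d * k) / k"
      using A kpos by (auto simp: field_simps abs_le_iff)
    then show ?thesis by (simp add: ceiling_le_iff le_floor_iff)
  qed
  have empty: "Q \<inter> cell k j = {}"
  proof (rule ccontr)
    assume "Q \<inter> cell k j \<noteq> {}"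
    then obtain v where v: "v \<in> Q" "v \<in> cell k j" by blast
    have vc: "v \<in> cube 0 n" "v \<in> cube y' (2 * k)" using cellsub[OF v(2)] by auto
    have dvy': "dist v y' \<le> 4 * d * k" using dist_center[OF vc(2)] unfolding d_def by (simp add: mult.commute mult.left_commute)
    have "dist v y < ell"
      using dist_triangle[of v y y'] dvy' dyy' rl l d1 kpos unfolding r_def ell_def
      by (simp add: dist_commute)
    moreover have "dist v z < ell"
      using dist_triangle[of v z y'] dvy' dy'z dk unfolding r_def
      by linarith
    ultimately show False using lune v(1) vc(1) unfolding ell_def by blast
  qed
  show ?thesis using jJ empty cellsub by blast
qed

lemma pow_fact_le_exp: "0 \<le> (y::real) \<Longrightarrow> y ^ p / fact p \<le> exp y"
proof -
  assume y: "0 \<le> y"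
  have s: "(\<lambda>n. y ^ n / fact n) sums exp y" using exp_converges[of y] by (simp add: divide_inverse mult.commute)
  have "sum (\<lambda>n. y ^ n / fact n) {p} \<le> suminf (\<lambda>n. y ^ n / fact n)"
    by (rule sum_le_suminf) (use s y in \<open>auto simp: sums_iff\<close>)
  then show ?thesis using s by (simp add: sums_iff)
qed

lemma pow_le_exp: "0 \<le> (y::real) \<Longrightarrow> 0 < s \<Longrightarrow> y ^ p \<le> fact p / s ^ p * exp (s * y)"
proof -
  assume y: "0 \<le> y" and s: "0 < s"
  have "(s * y) ^ p / fact p \<le> exp (s * y)" using pow_fact_le_exp[of "s * y" p] y s by simp
  then have "s ^ p * y ^ p \<le> fact p * exp (s * y)"
    by (simp add: power_mult_distrib field_simps)
  then show ?thesis using s by (simp add: field_simps)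
qed

lemma powr_le_1_plus_pow: "0 \<le> (y::real) \<Longrightarrow> 0 \<le> q \<Longrightarrow> q \<le> real p \<Longrightarrow> y powr q \<le> 1 + y ^ p"
proof -
  assume y: "0 \<le> y" and q: "0 \<le> q" "q \<le> real p"
  show ?thesis
  proof (cases "y \<le> 1")
    case True
    then have "y powr q \<le> 1" using y q by (simp add: powr_le1)
    then show ?thesis using zero_le_power[of y p] y by linarith
  next
    case False
    then have "y powr q \<le> y powr real p" using q by (intro powr_mono) auto
    also have "\<dots> = y ^ p" using False by (simp add: powr_realpow)
    finally show ?thesis by simp
  qed
qed

lemma poisson_mgf:
  fixes N :: "'a \<Rightarrow> nat" and lam s :: real
  assumes M: "prob_space M" and N: "N \<in> measurable M (count_space UNIV)" and lam: "0 \<le> lam"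
    and dist: "\<And>k. measure M {\<omega> \<in> space M. N \<omega> = k} = lam ^ k / fact k * exp (- lam)"
  shows "(\<integral>\<^sup>+\<omega>. ennreal (exp (s * real (N \<omega>))) \<partial>M) = ennreal (exp (lam * (exp s - 1)))"
proof -
  define A where "A k = {\<omega> \<in> space M. N \<omega> = k}" for k
  have A: "A k \<in> sets M" for k
    unfolding A_def using measurable_sets[OF N, of "{k}"] by (simp add: vimage_def Int_def conj_commute)
  have pt: "ennreal (exp (s * real (N \<omega>))) = (\<Sum>k. ennreal (exp (s * real k)) * indicator (A k) \<omega>)"
    if w: "\<omega> \<in> space M" for \<omega>
  proof -
    have "(\<lambda>k. ennreal (exp (s * real k)) * indicator (A k) \<omega>) = (\<lambda>k. if k = N \<omega> then ennreal (exp (s * real (N \<omega>))) else 0)"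
      using w unfolding A_def by (auto simp: indicator_def)
    moreover have "(\<lambda>k. if k = N \<omega> then ennreal (exp (s * real (N \<omega>))) else 0) sums ennreal (exp (s * real (N \<omega>)))"
      using sums_single[of "N \<omega>" "\<lambda>_. ennreal (exp (s * real (N \<omega>)))"] by simp
    ultimately show ?thesis by (simp add: sums_iff)
  qed
  have "(\<integral>\<^sup>+\<omega>. ennreal (exp (s * real (N \<omega>))) \<partial>M) = (\<integral>\<^sup>+\<omega>. (\<Sum>k. ennreal (exp (s * real k)) * indicator (A k) \<omega>) \<partial>M)"
    using pt by (intro nn_integral_cong) auto
  also have "\<dots> = (\<Sum>k. \<integral>\<^sup>+\<omega>. ennreal (exp (s * real k)) * indicator (A k) \<omega> \<partial>M)"
    using A by (intro nn_integral_suminf) auto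
  also have "\<dots> = (\<Sum>k. ennreal (exp (s * real k)) * emeasure M (A k))"
    using A by (simp add: nn_integral_cmult_indicator)
  also have "\<dots> = (\<Sum>k. ennreal (exp (- lam) * ((lam * exp s) ^ k / fact k)))"
  proof (intro suminf_cong)
    fix k
    have "emeasure M (A k) = ennreal (lam ^ k / fact k * exp (- lam))"
      using finite_measure.emeasure_eq_measure[OF prob_space.finite_measure[OF M]] dist unfolding A_def by simp
    moreover have "exp (s * real k) = exp s ^ k" by (metis exp_of_nat_mult mult.commute)
    ultimately show "ennreal (exp (s * real k)) * emeasure M (A k) = ennreal (exp (- lam) * ((lam * exp s) ^ k / fact k))"
      using lam by (simp add: ennreal_mult'[symmetric] power_mult_distrib field_simps)
  qed
  also have "\<dots> = ennreal (\<Sum>k. exp (- lam) * ((lam * exp s) ^ k / fact k))"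
  proof (rule suminf_ennreal2)
    show "\<And>k. 0 \<le> exp (- lam) * ((lam * exp s) ^ k / fact k)" using lam by simp
    have "summable (\<lambda>k. (lam * exp s) ^ k / fact k)"
      using exp_converges[of "lam * exp s"] by (simp add: sums_iff divide_inverse mult.commute)
    then show "summable (\<lambda>k. exp (- lam) * ((lam * exp s) ^ k / fact k))" by (rule summable_mult)
  qed
  also have "(\<Sum>k. exp (- lam) * ((lam * exp s) ^ k / fact k)) = exp (- lam) * exp (lam * exp s)"
  proof -
    have "(\<lambda>k. (lam * exp s) ^ k / fact k) sums exp (lam * exp s)"
      using exp_converges[of "lam * exp s"] by (simp add: divide_inverse mult.commute)
    then have "(\<lambda>k. exp (- lam) * ((lam * exp s) ^ k / fact k)) sums (exp (- lam) * exp (lam * exp s))"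
      by (rule sums_mult)
    then show ?thesis by (simp add: sums_iff)
  qed
  also have "\<dots> = exp (lam * (exp s - 1))" by (simp add: exp_add[symmetric] algebra_simps)
  finally show ?thesis .
qed

lemma amgm_ind: "0 < (t::real) \<Longrightarrow> (i = 0 \<or> i = 1) \<Longrightarrow> i * e \<le> t / 2 * e ^ 2 + i / (2 * t)"
proof -
  assume t: "0 < t" and i: "i = 0 \<or> i = 1"
  have "0 \<le> (t * e - i) ^ 2 / t" using t by simp
  also have "(t * e - i) ^ 2 / t = t * e ^ 2 - 2 * i * e + i ^ 2 / t"
    using t by (simp add: power2_eq_square field_simps)
  also have "i ^ 2 = i" using i by auto
  finally show ?thesis by (simp add: field_simps)
qed

lemma term_bound:
  fixes N :: "'a \<Rightarrow> nat" and lam eps t q pE :: real and p :: nat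
  assumes M: "prob_space M" and N: "N \<in> measurable M (count_space UNIV)" and lam: "0 \<le> lam"
    and dist: "\<And>k. measure M {\<omega> \<in> space M. N \<omega> = k} = lam ^ k / fact k * exp (- lam)"
    and E: "E \<in> sets M" "measure M E \<le> pE"
    and eps: "0 < eps" and t: "0 < t" and q: "0 \<le> q" "q \<le> real p"
  shows "(\<integral>\<^sup>+\<omega>. ennreal (indicator E \<omega> * real (N \<omega>) powr q) \<partial>M)
     \<le> ennreal ((1 + fact p / eps ^ p / (2 * t)) * pE + fact p / eps ^ p * t / 2 * exp (lam * (exp (2 * eps) - 1)))"
proof -
  define B where "B = fact p / eps ^ p"
  have B0: "0 \<le> B" unfolding B_def using eps by simp
  define c1 where "c1 = 1 + B / (2 * t)"
  define c2 where "c2 = B * t / 2"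
  have c0: "0 \<le> c1" "0 \<le> c2" unfolding c1_def c2_def using B0 t by auto
  have pw: "indicator E \<omega> * real (N \<omega>) powr q \<le> c1 * indicator E \<omega> + c2 * exp ((2 * eps) * real (N \<omega>))" for \<omega>
  proof -
    define i :: real where "i = indicator E \<omega>"
    have i01: "i = 0 \<or> i = 1" "0 \<le> i" unfolding i_def by (auto simp: indicator_def)
    let ?y = "real (N \<omega>)"
    have "?y powr q \<le> 1 + ?y ^ p" using powr_le_1_plus_pow[of ?y q p] q by simp
    also have "?y ^ p \<le> B * exp (eps * ?y)" using pow_le_exp[of ?y eps p] eps unfolding B_def by simp
    finally have "i * ?y powr q \<le> i * (1 + B * exp (eps * ?y))" using i01 by (intro mult_left_mono) auto
    also have "\<dots> = i + B * (i * exp (eps * ?y))" by (simp add: algebra_simps)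
    also have "i * exp (eps * ?y) \<le> t / 2 * (exp (eps * ?y)) ^ 2 + i / (2 * t)" by (rule amgm_ind[OF t i01(1)])
    also have "(exp (eps * ?y)) ^ 2 = exp ((2 * eps) * ?y)" by (simp add: power2_eq_square exp_add[symmetric] algebra_simps)
    finally have "i * ?y powr q \<le> i + B * (t / 2 * exp ((2 * eps) * ?y) + i / (2 * t))"
      using B0 by (simp add: mult_left_mono)
    then show ?thesis unfolding i_def c1_def c2_def by (simp add: algebra_simps)
  qed
  have meas_e: "(\<lambda>\<omega>. ennreal (exp ((2 * eps) * real (N \<omega>)))) \<in> borel_measurable M"
    by (rule measurable_compose[OF N]) simp
  have "(\<integral>\<^sup>+\<omega>. ennreal (indicator E \<omega> * real (N \<omega>) powr q) \<partial>M)
      \<le> (\<integral>\<^sup>+\<omega>. ennreal c1 * indicator E \<omega> + ennreal c2 * ennreal (exp ((2 * eps) * real (N \<omega>))) \<partial>M)"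
  proof (rule nn_integral_mono)
    fix \<omega>
    have "ennreal (indicator E \<omega> * real (N \<omega>) powr q) \<le> ennreal (c1 * indicator E \<omega> + c2 * exp ((2 * eps) * real (N \<omega>)))"
      using pw by (rule ennreal_leI)
    also have "\<dots> = ennreal c1 * indicator E \<omega> + ennreal c2 * ennreal (exp ((2 * eps) * real (N \<omega>)))"
      using c0 by (simp add: ennreal_mult' ennreal_indicator)
    finally show "ennreal (indicator E \<omega> * real (N \<omega>) powr q) \<le> ennreal c1 * indicator E \<omega> + ennreal c2 * ennreal (exp ((2 * eps) * real (N \<omega>)))" .
  qed
  also have "\<dots> = ennreal c1 * emeasure M E + ennreal c2 * (\<integral>\<^sup>+\<omega>. ennreal (exp ((2 * eps) * real (N \<omega>))) \<partial>M)"
    using E(1) meas_e by (simp add: nn_integral_add nn_integral_cmult nn_integral_cmult_indicator)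
  also have "\<dots> = ennreal c1 * ennreal (measure M E) + ennreal c2 * ennreal (exp (lam * (exp (2 * eps) - 1)))"
    using poisson_mgf[OF M N lam dist] finite_measure.emeasure_eq_measure[OF prob_space.finite_measure[OF M]] by simp
  also have "\<dots> \<le> ennreal c1 * ennreal pE + ennreal c2 * ennreal (exp (lam * (exp (2 * eps) - 1)))"
    using E(2) by (intro add_mono mult_left_mono ennreal_leI) auto
  also have "\<dots> = ennreal (c1 * pE + c2 * exp (lam * (exp (2 * eps) - 1)))"
  proof -
    have pE0: "0 \<le> pE" using E(2) measure_nonneg[of M E] by linarith
    then have "0 \<le> c1 * pE" "0 \<le> c2 * exp (lam * (exp (2 * eps) - 1))" using c0 by auto
    then show ?thesis using c0 pE0 by (simp add: ennreal_mult')
  qed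
  finally show ?thesis unfolding c1_def c2_def B_def by simp
qed

lemma sum_pow_le: "0 \<le> (v::real) \<Longrightarrow> 0 \<le> w \<Longrightarrow> (v + w) ^ d \<le> 2 ^ d * (v ^ d + w ^ d)"
proof -
  assume v: "0 \<le> v" and w: "0 \<le> w"
  have "(v + w) ^ d \<le> (2 * max v w) ^ d" using v w by (intro power_mono) auto
  also have "\<dots> = 2 ^ d * max v w ^ d" by (simp add: power_mult_distrib)
  also have "max v w ^ d \<le> v ^ d + w ^ d" using v w by (cases "v \<le> w") (auto simp: max_def)
  then have "2 ^ d * max v w ^ d \<le> 2 ^ d * (v ^ d + w ^ d)" by simp
  finally show ?thesis .
qed

lemma bracket_bound:
  fixes G B lam del A0 u :: real
  assumes G: "0 \<le> G" and B: "0 \<le> B" and u: "0 \<le> u" and ld: "lam * del \<le> A0 + u / 2"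
  shows "(1 + B / (2 * exp (- (3 * u / 4)))) * (G * exp (- u)) + B * exp (- (3 * u / 4)) / 2 * exp (lam * del)
         \<le> (G + B * G / 2 + B / 2 * exp A0) * exp (- (u / 4))"
proof -
  have e1: "G * exp (- u) \<le> G * exp (- (u / 4))" using G u by (intro mult_left_mono) auto
  have e2: "B / (2 * exp (- (3 * u / 4))) * (G * exp (- u)) = B * G / 2 * exp (- (u / 4))"
    by (simp add: field_simps exp_add[symmetric] exp_minus)
  have e3: "B * exp (- (3 * u / 4)) / 2 * exp (lam * del) \<le> B * exp (- (3 * u / 4)) / 2 * exp (A0 + u / 2)"
    using B ld by (intro mult_left_mono) auto
  have e4: "B * exp (- (3 * u / 4)) / 2 * exp (A0 + u / 2) = B / 2 * exp A0 * exp (- (u / 4))"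
    by (simp add: exp_add[symmetric] algebra_simps)
  have "(1 + B / (2 * exp (- (3 * u / 4)))) * (G * exp (- u)) + B * exp (- (3 * u / 4)) / 2 * exp (lam * del)
     = G * exp (- u) + B / (2 * exp (- (3 * u / 4))) * (G * exp (- u)) + B * exp (- (3 * u / 4)) / 2 * exp (lam * del)"
    by (simp add: distrib_right)
  also have "\<dots> \<le> G * exp (- (u / 4)) + B * G / 2 * exp (- (u / 4)) + B / 2 * exp A0 * exp (- (u / 4))"
    using e1 e2 e3 e4 by linarith
  also have "\<dots> = (G + B * G / 2 + B / 2 * exp A0) * exp (- (u / 4))" by (simp add: algebra_simps)
  finally show ?thesis .
qed

lemma poly_exp_bound:
  fixes q :: real and p :: nat and m :: nat
  assumes q: "0 \<le> q" "q \<le> real p"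
  shows "(1 + real m) powr q * exp (- (real m / 4)) \<le> (1 + fact p * 8 ^ p * exp (1 / 8)) * exp (- (real m / 8))"
proof -
  have "(1 + real m) powr q \<le> 1 + (1 + real m) ^ p" using powr_le_1_plus_pow[OF _ q] by simp
  also have "(1 + real m) ^ p \<le> fact p / (1 / 8) ^ p * exp (1 / 8 * (1 + real m))"
    by (rule pow_le_exp) auto
  also have "exp (1 / 8 * (1 + real m)) = exp (1 / 8 + real m / 8)" by (simp add: algebra_simps)
  finally have a: "(1 + real m) powr q \<le> 1 + fact p * 8 ^ p * exp (1 / 8 + real m / 8)"
    by (simp add: power_divide algebra_simps)
  have "(1 + real m) powr q * exp (- (real m / 4)) \<le> (1 + fact p * 8 ^ p * exp (1 / 8 + real m / 8)) * exp (- (real m / 4))"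
    using a by (intro mult_right_mono) auto
  also have "\<dots> = exp (- (real m / 4)) + fact p * 8 ^ p * exp (1 / 8) * exp (- (real m / 8))"
    by (simp add: algebra_simps exp_add[symmetric])
  also have "exp (- (real m / 4)) \<le> exp (- (real m / 8))" by simp
  finally show ?thesis by (simp add: algebra_simps)
qed

lemma geom_summable: "summable (\<lambda>m::nat. K * exp (- (real m / 8)))"
proof -
  have "(\<lambda>m::nat. exp (- (real m / 8))) = (\<lambda>m. exp (- (1 / 8)) ^ m)"
    by (rule ext) (simp add: exp_of_nat_mult[symmetric] algebra_simps)
  moreover have "summable (\<lambda>m::nat. exp (- (1 / 8 :: real)) ^ m)" by (rule summable_geometric) simp
  ultimately show ?thesis by (simp add: summable_mult)
qed

lemma cube_bounded: "bounded (cube x r)"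
  unfolding cube_def by simp

lemma cube_borel: "cube x r \<in> sets lborel"
  unfolding cube_def by simp

lemma cell_borel: "cell k j \<in> sets lborel" and cell_bounded: "bounded (cell k j)"
  unfolding cell_def by simp_all

lemma measure_cube: "0 \<le> r \<Longrightarrow> measure lborel (cube (x::'b::euclidean_space) r) = (2 * r) ^ DIM('b)"
  unfolding cube_def by (simp add: measure_lborel_cbox_eq inner_simps)

lemma measure_cell: "0 \<le> k \<Longrightarrow> measure lborel (cell k (j::'b::euclidean_space \<Rightarrow> int)) = k ^ DIM('b)"
  unfolding cell_def
  by (simp add: measure_lborel_cbox_eq inner_sum_left inner_Basis if_distrib sum.delta algebra_simps
        cong: if_cong)

lemma cell_restrict: "cell k (restrict j Basis) = cell k j"
  unfolding cell_def by (intro arg_cong2[where f=cbox] sum.cong) auto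

lemma card_Icc_bound:
  fixes c b :: real assumes "c \<le> b"
  shows "real (card {\<lceil>c\<rceil> .. \<lfloor>b\<rfloor>}) \<le> b - c + 1"
proof -
  have "card {\<lceil>c\<rceil> .. \<lfloor>b\<rfloor>} = nat (\<lfloor>b\<rfloor> - \<lceil>c\<rceil> + 1)" by simp
  moreover have "real_of_int (\<lfloor>b\<rfloor> - \<lceil>c\<rceil> + 1) \<le> b - c + 1" by linarith
  ultimately show ?thesis using assms by linarith
qed


lemma pp_facts:
  assumes pp: "poisson_pp M P" and A: "A \<in> sets lborel" "bounded A"
  shows "prob_space M" "(\<lambda>\<omega>. card (P \<omega> \<inter> A)) \<in> measurable M (count_space UNIV)"
    "\<And>k. measure M {\<omega> \<in> space M. card (P \<omega> \<inter> A) = k} = (measure lborel A) ^ k / fact k * exp (- measure lborel A)"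
    "\<And>\<omega>. \<omega> \<in> space M \<Longrightarrow> finite (P \<omega> \<inter> A)"
  using pp A unfolding poisson_pp_def by auto

lemma event_bound:
  fixes M :: "'a measure" and P :: "'a \<Rightarrow> 'b::euclidean_space set" and x :: 'b and a0 n :: real and m :: nat
  defines "d \<equiv> real DIM('b)"
  defines "J \<equiv> (\<lambda>i. {\<lceil>(x \<bullet> i - a0 - 7 * d * real m) / real m\<rceil> .. \<lfloor>(x \<bullet> i + a0 + 7 * d * real m) / real m\<rfloor>})"
  defines "E \<equiv> {\<omega> \<in> space M. \<exists>j\<in>PiE Basis J. cell (real m) j \<subseteq> cube 0 n \<and> card (P \<omega> \<inter> cell (real m) j) = 0}"
  assumes pp: "poisson_pp M P" and m: "1 \<le> m" and a0: "0 \<le> a0"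
  shows "E \<in> sets M" "measure M E \<le> (2 * a0 + 14 * d + 1) ^ DIM('b) * exp (- (real m ^ DIM('b)))"
proof -
  define Js where "Js = {j \<in> PiE Basis J. cell (real m) j \<subseteq> cube 0 n}"
  define A where "A j = {\<omega> \<in> space M. card (P \<omega> \<inter> cell (real m) j) = 0}" for j
  have EA: "E = (\<Union>j\<in>Js. A j)" unfolding E_def Js_def A_def by auto
  have fJ: "finite (PiE Basis J)" unfolding J_def by (intro finite_PiE) auto
  have fJs: "finite Js" unfolding Js_def using fJ by simp
  have A: "A j \<in> sets M" for j
  proof -
    have "(\<lambda>\<omega>. card (P \<omega> \<inter> cell (real m) j)) \<in> measurable M (count_space UNIV)"
      using pp_facts(2)[OF pp cell_borel cell_bounded] .
    from measurable_sets[OF this, of "{0}"] show ?thesis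
      unfolding A_def by (simp add: vimage_def Int_def conj_commute)
  qed
  show "E \<in> sets M" unfolding EA using A fJs by auto
  have mA: "measure M (A j) = exp (- (real m ^ DIM('b)))" for j
    using pp_facts(3)[OF pp cell_borel[of "real m" j] cell_bounded[of "real m" j], of 0] measure_cell[of "real m" j]
    unfolding A_def by simp
  have "measure M E \<le> (\<Sum>j\<in>Js. measure M (A j))" unfolding EA using fJs A by (rule measure_UNION_le)
  also have "\<dots> = real (card Js) * exp (- (real m ^ DIM('b)))" using mA by simp
  also have "real (card Js) \<le> real (card (PiE Basis J))" unfolding Js_def using fJ by (intro of_nat_mono card_mono) auto
  also have "real (card (PiE Basis J)) = (\<Prod>i\<in>Basis. real (card (J i)))" by (simp add: card_PiE)
  also have "\<dots> \<le> (\<Prod>i\<in>(Basis::'b set). 2 * a0 + 14 * d + 1)"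
  proof (rule prod_mono)
    fix i :: 'b assume i: "i \<in> Basis"
    have mpos: "0 < real m" using m by simp
    have d0: "0 \<le> d" unfolding d_def by simp
    have le: "(x \<bullet> i - a0 - 7 * d * real m) / real m \<le> (x \<bullet> i + a0 + 7 * d * real m) / real m"
      using mpos a0 d0 by (intro divide_right_mono) auto
    have "real (card (J i)) \<le> (x \<bullet> i + a0 + 7 * d * real m) / real m - (x \<bullet> i - a0 - 7 * d * real m) / real m + 1"
      unfolding J_def by (rule card_Icc_bound[OF le])
    also have "\<dots> = 2 * a0 / real m + 14 * d + 1" using mpos by (simp add: field_simps)
    also have "2 * a0 / real m \<le> 2 * a0"
    proof -
      have "2 * a0 * 1 \<le> 2 * a0 * real m" using m a0 by (intro mult_left_mono) auto
      then show ?thesis using mpos by (simp add: divide_le_eq)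
    qed
    finally show "0 \<le> real (card (J i)) \<and> real (card (J i)) \<le> 2 * a0 + 14 * d + 1" by simp
  qed
  also have "\<dots> = (2 * a0 + 14 * d + 1) ^ DIM('b)" by simp
  finally show "measure M E \<le> (2 * a0 + 14 * d + 1) ^ DIM('b) * exp (- (real m ^ DIM('b)))"
    by (simp add: mult_right_mono)
qed

lemma pointwise:
  fixes Pw :: "'b::euclidean_space set" and x :: 'b and a a0 n q :: real
  defines "d \<equiv> real DIM('b)"
  defines "J \<equiv> (\<lambda>m::nat. \<lambda>i. {\<lceil>(x \<bullet> i - a0 - 7 * d * real m) / real m\<rceil> .. \<lfloor>(x \<bullet> i + a0 + 7 * d * real m) / real m\<rfloor>})"
  assumes fin: "\<And>A. bounded A \<Longrightarrow> finite (Pw \<inter> A)"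
    and a: "0 < a" "a \<le> a0" and q: "0 \<le> q"
  shows "\<exists>m::nat. (m = 0 \<or> (\<exists>j\<in>PiE Basis (J m). cell (real m) j \<subseteq> cube 0 n \<and> card (Pw \<inter> cell (real m) j) = 0)) \<and>
     \<bar>MST_len (Pw \<inter> cube 0 n) - MST_len (Pw \<inter> (cube 0 n - cube x a))\<bar> powr q
       \<le> ((24 * d + 2 * a0 * d) * (1 + real m)) powr q * real (card (Pw \<inter> cube x (a0 + 12 * d * (real m + 1)))) powr q"
proof -
  define X where "X = Pw \<inter> cube 0 n"
  have fX: "finite X" unfolding X_def using fin cube_bounded by blast
  have XD: "X - cube x a = Pw \<inter> (cube 0 n - cube x a)" unfolding X_def by blast
  have d1: "1 \<le> d" unfolding d_def using DIM_positive[where 'a='b] by linarith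
  obtain L where L0: "0 \<le> L"
    and bnd: "\<bar>MST_len X - MST_len (X - cube x a)\<bar> \<le> card (X \<inter> cube x (a + L)) * (2 * L + 2 * a * d)"
    and lune: "L = 0 \<or> (\<exists>y\<in>X \<inter> cube x a. \<exists>z\<in>X. dist y z = L \<and> (\<forall>w\<in>X. \<not> (dist w y < L \<and> dist w z < L)))"
    using det_bound[OF fX, of a x] a unfolding d_def by auto
  define m where "m = nat \<lfloor>L / (12 * d)\<rfloor>"
  have t0: "0 \<le> L / (12 * d)" using L0 d1 by simp
  have mf: "real m = real_of_int \<lfloor>L / (12 * d)\<rfloor>" unfolding m_def using t0 by simp
  have md: "real m \<le> L / (12 * d)" "L / (12 * d) < real m + 1" unfolding mf by linarith+
  have mL: "12 * d * real m \<le> L" "L < 12 * d * (real m + 1)" using md d1 by (simp_all add: field_simps)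
  define \<rho> where "\<rho> = a0 + 12 * d * (real m + 1)"
  define N where "N = card (Pw \<inter> cube x \<rho>)"
  have cardle: "card (X \<inter> cube x (a + L)) \<le> N"
  proof -
    have "X \<inter> cube x (a + L) \<subseteq> Pw \<inter> cube x \<rho>"
      using cube_mono[of "a + L" \<rho> x] mL a unfolding X_def \<rho>_def by auto
    then show ?thesis unfolding N_def using fin[OF cube_bounded] by (intro card_mono) auto
  qed
  have fac: "2 * L + 2 * a * d \<le> (24 * d + 2 * a0 * d) * (1 + real m)"
  proof -
    have "2 * a * d \<le> 2 * a0 * d" using a d1 by simp
    also have "2 * a0 * d \<le> 2 * a0 * d * (1 + real m)" using a d1 by simp
    finally show ?thesis using mL by (simp add: algebra_simps)
  qed
  have Dle: "\<bar>MST_len X - MST_len (X - cube x a)\<bar> \<le> real N * ((24 * d + 2 * a0 * d) * (1 + real m))"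
  proof -
    have "card (X \<inter> cube x (a + L)) * (2 * L + 2 * a * d) \<le> real N * ((24 * d + 2 * a0 * d) * (1 + real m))"
      using cardle fac L0 a d1 by (intro mult_mono) auto
    then show ?thesis using bnd by linarith
  qed
  have good: "m = 0 \<or> (\<exists>j\<in>PiE Basis (J m). cell (real m) j \<subseteq> cube 0 n \<and> card (Pw \<inter> cell (real m) j) = 0)"
  proof (cases "m = 0")
    case False
    then have m1: "1 \<le> real m" by simp
    then have "0 < L" using mL(1) d1 by (smt (verit) mult_pos_pos)
    then obtain y z where yz: "y \<in> X \<inter> cube x a" "z \<in> X" "dist y z = L" "\<forall>w\<in>X. \<not> (dist w y < L \<and> dist w z < L)"
      using lune by auto
    have "\<exists>j. (\<forall>i\<in>Basis. j i \<in> {\<lceil>(x \<bullet> i - a0 - 7 * d * real m) / real m\<rceil> .. \<lfloor>(x \<bullet> i + a0 + 7 * d * real m) / real m\<rfloor>})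
             \<and> cell (real m) j \<subseteq> cube 0 n \<and> Pw \<inter> cell (real m) j = {}"
      unfolding d_def
    proof (rule geo)
      show "1 \<le> real m" by (rule m1)
      show "y \<in> cube 0 n" "y \<in> cube x a" "z \<in> cube 0 n" using yz unfolding X_def by auto
      show "a \<le> a0" by (rule a(2))
      show "12 * real DIM('b) * real m \<le> dist y z" using yz(3) mL(1) unfolding d_def by simp
      show "\<forall>w\<in>Pw \<inter> cube 0 n. \<not> (dist w y < dist y z \<and> dist w z < dist y z)"
        using yz(3,4) unfolding X_def by simp
    qed
    then obtain j where j: "\<forall>i\<in>Basis. j i \<in> J m i" "cell (real m) j \<subseteq> cube 0 n" "Pw \<inter> cell (real m) j = {}"
      unfolding J_def by blast
    have "restrict j Basis \<in> PiE Basis (J m)" using j(1) by auto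
    moreover have "cell (real m) (restrict j Basis) \<subseteq> cube 0 n" "card (Pw \<inter> cell (real m) (restrict j Basis)) = 0"
      using j(2,3) by (simp_all add: cell_restrict)
    ultimately show ?thesis by blast
  qed simp
  have "\<bar>MST_len X - MST_len (X - cube x a)\<bar> powr q \<le> (real N * ((24 * d + 2 * a0 * d) * (1 + real m))) powr q"
    using Dle q by (intro powr_mono2) auto
  also have "\<dots> = ((24 * d + 2 * a0 * d) * (1 + real m)) powr q * real N powr q"
    using a d1 by (simp add: powr_mult mult.commute)
  finally show ?thesis using good unfolding X_def[symmetric] XD[symmetric] N_def \<rho>_def by blast
qed

lemma real_le_pow: "1 \<le> D \<Longrightarrow> real m \<le> real m ^ D"
proof (cases "m = 0")
  case False
  assume D: "1 \<le> D"
  have "real m ^ 1 \<le> real m ^ D" using False D by (intro power_increasing) auto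
  then show ?thesis by simp
qed (simp)

lemma lam_bound:
  fixes a0 d del :: real and D m :: nat
  assumes a0: "0 \<le> a0" and d: "0 \<le> d" and del: "del = 1 / (2 * (48 * d) ^ D)" and dpos: "0 < d"
  shows "(2 * (a0 + 12 * d * (real m + 1))) ^ D * del \<le> del * 2 ^ D * (2 * a0 + 24 * d) ^ D + real m ^ D / 2"
proof -
  have del0: "0 \<le> del" unfolding del using d by simp
  have "(2 * (a0 + 12 * d * (real m + 1))) ^ D = ((2 * a0 + 24 * d) + 24 * d * real m) ^ D"
    by (simp add: algebra_simps)
  also have "\<dots> \<le> 2 ^ D * ((2 * a0 + 24 * d) ^ D + (24 * d * real m) ^ D)"
    using a0 d by (intro sum_pow_le) auto
  finally have "(2 * (a0 + 12 * d * (real m + 1))) ^ D * del \<le> 2 ^ D * ((2 * a0 + 24 * d) ^ D + (24 * d * real m) ^ D) * del"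
    using del0 by (rule mult_right_mono)
  also have "\<dots> = del * 2 ^ D * (2 * a0 + 24 * d) ^ D + del * (2 ^ D * (24 * d * real m) ^ D)"
    by (simp add: algebra_simps)
  also have "2 ^ D * (24 * d * real m) ^ D = (48 * d) ^ D * real m ^ D"
  proof -
    have "2 ^ D * (24 * d * real m) ^ D = (2 * (24 * d * real m)) ^ D" by (rule power_mult_distrib[symmetric])
    also have "\<dots> = ((48 * d) * real m) ^ D" by (simp add: algebra_simps)
    also have "\<dots> = (48 * d) ^ D * real m ^ D" by (rule power_mult_distrib)
    finally show ?thesis .
  qed
  also have "del * ((48 * d) ^ D * real m ^ D) = (del * (48 * d) ^ D) * real m ^ D" by simp
  also have "del * (48 * d) ^ D = 1 / 2" unfolding del using dpos by simp
  finally show ?thesis by simp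
qed

theorem lemma7p7:
  fixes a0 q :: real
  assumes "a0 > 0" and "q \<ge> 1"
  shows "\<exists>C::real. \<forall>(M::'a measure) (P::'a \<Rightarrow> 'b::euclidean_space set) (x::'b) (a::real) (n::real).
           poisson_pp M P \<and> 0 < a \<and> a \<le> a0 \<and> n \<ge> max (2 * a0) 1 \<and> cube x a \<subseteq> cube 0 n \<longrightarrow>
           (\<integral>\<^sup>+ \<omega>. ennreal (\<bar>MST_len (P \<omega> \<inter> cube 0 n) - MST_len (P \<omega> \<inter> (cube 0 n - cube x a))\<bar> powr q) \<partial>M)
             \<le> ennreal C"
proof -
  have a00: "0 < a0" and q1: "1 \<le> q" using assms by auto
  define D where "D = DIM('b)"
  define d where "d = real DIM('b)"
  have d1: "1 \<le> d" unfolding d_def using DIM_positive[where 'a='b] by linarith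
  have D1: "1 \<le> D" unfolding D_def using DIM_positive[where 'a='b] by linarith
  define p where "p = nat \<lceil>q\<rceil>"
  have qp: "q \<le> real p" unfolding p_def using q1 by linarith
  define c1 where "c1 = 24 * d + 2 * a0 * d"
  have c10: "0 \<le> c1" unfolding c1_def using d1 a00 by simp
  define G where "G = (2 * a0 + 14 * d + 1) ^ D"
  have G1: "1 \<le> G" unfolding G_def using a00 d1 by (intro one_le_power) auto
  define del where "del = 1 / (2 * (48 * d) ^ D)"
  have del0: "0 < del" unfolding del_def using d1 by simp
  define eps where "eps = ln (1 + del) / 2"
  have eps0: "0 < eps" unfolding eps_def using del0 by simp
  have epsdel: "exp (2 * eps) - 1 = del" unfolding eps_def using del0 by simp
  define B :: real where "B = fact p / eps ^ p"
  have B0: "0 \<le> B" unfolding B_def using eps0 by simp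
  define A0 where "A0 = del * 2 ^ D * (2 * a0 + 24 * d) ^ D"
  define W where "W = G + B * G / 2 + B / 2 * exp A0"
  have W0: "0 \<le> W" unfolding W_def using G1 B0 by simp
  define F :: real where "F = 1 + fact p * 8 ^ p * exp (1 / 8)"
  have F0: "0 \<le> F" unfolding F_def by simp
  define K where "K = c1 powr q * W * F"
  have K0: "0 \<le> K" unfolding K_def using W0 F0 by simp
  define C where "C = (\<Sum>m. K * exp (- (real m / 8)))"
  show ?thesis
  proof (intro exI[of _ C] allI impI)
    fix M :: "'a measure" and P :: "'a \<Rightarrow> 'b set" and x :: 'b and a n :: real
    assume H: "poisson_pp M P \<and> 0 < a \<and> a \<le> a0 \<and> n \<ge> max (2 * a0) 1 \<and> cube x a \<subseteq> cube 0 n"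
    then have pp: "poisson_pp M P" and a: "0 < a" "a \<le> a0" by auto
    have Mp: "prob_space M" using pp unfolding poisson_pp_def by simp
    have finP: "\<And>\<omega> A. \<omega> \<in> space M \<Longrightarrow> bounded A \<Longrightarrow> finite (P \<omega> \<inter> A)"
      using pp unfolding poisson_pp_def by blast
    define \<rho> where "\<rho> m = a0 + 12 * d * (real m + 1)" for m :: nat
    define N where "N m \<omega> = card (P \<omega> \<inter> cube x (\<rho> m))" for m \<omega>
    define J where "J = (\<lambda>m::nat. \<lambda>i. {\<lceil>(x \<bullet> i - a0 - 7 * d * real m) / real m\<rceil> .. \<lfloor>(x \<bullet> i + a0 + 7 * d * real m) / real m\<rfloor>})"
    define Ev where "Ev m = (if m = 0 then space M else
       {\<omega> \<in> space M. \<exists>j\<in>PiE Basis (J m). cell (real m) j \<subseteq> cube 0 n \<and> card (P \<omega> \<inter> cell (real m) j) = 0})" for m :: nat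
    define g where "g m \<omega> = ennreal ((c1 * (1 + real m)) powr q) * ennreal (indicator (Ev m) \<omega> * real (N m \<omega>) powr q)" for m \<omega>
    have Ev_facts: "Ev m \<in> sets M \<and> measure M (Ev m) \<le> G * exp (- (real m ^ D))" for m
    proof (cases "m = 0")
      case True
      then show ?thesis unfolding Ev_def using prob_space.prob_space[OF Mp] G1 D1 by (simp add: power_0_left)
    next
      case False
      then have m1: "1 \<le> m" by simp
      show ?thesis using event_bound[OF pp m1 less_imp_le[OF a00], of x n] False
        unfolding Ev_def J_def d_def G_def D_def by simp
    qed
    have Nm: "N m \<in> measurable M (count_space UNIV)" for m
      unfolding N_def by (rule pp_facts(2)[OF pp cube_borel cube_bounded])
    have Nd: "measure M {\<omega> \<in> space M. N m \<omega> = k} = (measure lborel (cube x (\<rho> m))) ^ k / fact k * exp (- measure lborel (cube x (\<rho> m)))" for m k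
      unfolding N_def by (rule pp_facts(3)[OF pp cube_borel cube_bounded])
    have rho0: "0 \<le> \<rho> m" for m unfolding \<rho>_def using a00 d1 by simp
    have lam: "measure lborel (cube x (\<rho> m)) = (2 * (a0 + 12 * d * (real m + 1))) ^ D" for m
      using measure_cube[OF rho0[of m], of x] unfolding \<rho>_def D_def by simp
    have gmeas: "g m \<in> borel_measurable M" for m
    proof -
      have m1: "(\<lambda>\<omega>. ennreal (real (N m \<omega>) powr q)) \<in> borel_measurable M"
        by (rule measurable_compose[OF Nm]) simp
      have m2: "(\<lambda>\<omega>. indicator (Ev m) \<omega> :: ennreal) \<in> borel_measurable M"
        using Ev_facts[of m] by (intro borel_measurable_indicator) simp
      have m3: "(\<lambda>\<omega>. indicator (Ev m) \<omega> * ennreal (real (N m \<omega>) powr q)) \<in> borel_measurable M"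
        by (rule borel_measurable_times_ennreal[OF m2 m1])
      have eq: "g m = (\<lambda>\<omega>. ennreal ((c1 * (1 + real m)) powr q) * (indicator (Ev m) \<omega> * ennreal (real (N m \<omega>) powr q)))"
        unfolding g_def by (intro ext) (simp add: ennreal_mult' ennreal_indicator)
      show ?thesis unfolding eq by (rule borel_measurable_times_ennreal[OF measurable_const m3]) simp
    qed
    have pw: "ennreal (\<bar>MST_len (P \<omega> \<inter> cube 0 n) - MST_len (P \<omega> \<inter> (cube 0 n - cube x a))\<bar> powr q) \<le> (\<Sum>m. g m \<omega>)"
      if w: "\<omega> \<in> space M" for \<omega>
    proof -
      obtain m where good: "m = 0 \<or> (\<exists>j\<in>PiE Basis (J m). cell (real m) j \<subseteq> cube 0 n \<and> card (P \<omega> \<inter> cell (real m) j) = 0)"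
        and ineq: "\<bar>MST_len (P \<omega> \<inter> cube 0 n) - MST_len (P \<omega> \<inter> (cube 0 n - cube x a))\<bar> powr q
           \<le> ((24 * d + 2 * a0 * d) * (1 + real m)) powr q * real (card (P \<omega> \<inter> cube x (a0 + 12 * d * (real m + 1)))) powr q"
        using pointwise[of "P \<omega>" a a0 q x n] finP[OF w] a q1 unfolding J_def d_def by auto
      have ind: "indicator (Ev m) \<omega> = (1::real)" using good w unfolding Ev_def by (auto simp: indicator_def)
      have "ennreal (\<bar>MST_len (P \<omega> \<inter> cube 0 n) - MST_len (P \<omega> \<inter> (cube 0 n - cube x a))\<bar> powr q)
          \<le> ennreal ((c1 * (1 + real m)) powr q * real (N m \<omega>) powr q)"
        using ineq unfolding c1_def N_def \<rho>_def by (rule ennreal_leI)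
      also have "\<dots> = g m \<omega>" unfolding g_def ind by (simp add: ennreal_mult')
      also have "\<dots> \<le> (\<Sum>m. g m \<omega>)" using sum_le_suminf[OF summableI, of "{m}" "\<lambda>m. g m \<omega>"] by simp
      finally show ?thesis .
    qed
    have tb: "(\<integral>\<^sup>+\<omega>. g m \<omega> \<partial>M) \<le> ennreal (K * exp (- (real m / 8)))" for m
    proof -
      define u where "u = real m ^ D"
      have u0: "0 \<le> u" unfolding u_def by simp
      define t where "t = exp (- (3 * u / 4))"
      have t0: "0 < t" unfolding t_def by simp
      define lam where "lam = measure lborel (cube x (\<rho> m))"
      have lam0: "0 \<le> lam" unfolding lam_def by simp
      have ld: "lam * del \<le> A0 + u / 2"
        unfolding lam_def lam A0_def u_def using lam_bound[of a0 d del D m] a00 d1 del_def by simp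
      have meas2: "(\<lambda>\<omega>. ennreal (indicator (Ev m) \<omega> * real (N m \<omega>) powr q)) \<in> borel_measurable M"
      proof -
        have m1: "(\<lambda>\<omega>. real (N m \<omega>) powr q) \<in> borel_measurable M" by (rule measurable_compose[OF Nm]) simp
        have m2: "(\<lambda>\<omega>. indicator (Ev m) \<omega> :: real) \<in> borel_measurable M" using Ev_facts[of m] by (intro borel_measurable_indicator) simp
        have "(\<lambda>\<omega>. indicator (Ev m) \<omega> * real (N m \<omega>) powr q) \<in> borel_measurable M"
          by (rule borel_measurable_times[OF m2 m1])
        then show ?thesis by (rule measurable_compose) simp
      qed
      have i1: "(\<integral>\<^sup>+\<omega>. g m \<omega> \<partial>M) = ennreal ((c1 * (1 + real m)) powr q) * (\<integral>\<^sup>+\<omega>. ennreal (indicator (Ev m) \<omega> * real (N m \<omega>) powr q) \<partial>M)"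
        unfolding g_def using meas2 by (rule nn_integral_cmult)
      have i2: "(\<integral>\<^sup>+\<omega>. ennreal (indicator (Ev m) \<omega> * real (N m \<omega>) powr q) \<partial>M)
          \<le> ennreal ((1 + fact p / eps ^ p / (2 * t)) * (G * exp (- u)) + fact p / eps ^ p * t / 2 * exp (lam * (exp (2 * eps) - 1)))"
      proof -
        have e1: "Ev m \<in> sets M" and e2: "measure M (Ev m) \<le> G * exp (- u)" using Ev_facts[of m] unfolding u_def by auto
        have q0: "0 \<le> q" using q1 by simp
        show ?thesis using term_bound[OF Mp Nm[of m] lam0 Nd[of m, folded lam_def] e1 e2 eps0 t0 q0 qp] unfolding lam_def by simp
      qed
      have i3: "(1 + fact p / eps ^ p / (2 * t)) * (G * exp (- u)) + fact p / eps ^ p * t / 2 * exp (lam * (exp (2 * eps) - 1))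
          \<le> W * exp (- (u / 4))"
        unfolding epsdel t_def W_def B_def[symmetric] using bracket_bound[OF _ B0 u0 ld, of G] G1 by simp
      have i4: "ennreal ((c1 * (1 + real m)) powr q) * ennreal (W * exp (- (u / 4))) \<le> ennreal (K * exp (- (real m / 8)))"
      proof -
        have "(c1 * (1 + real m)) powr q * (W * exp (- (u / 4))) = c1 powr q * W * ((1 + real m) powr q * exp (- (u / 4)))"
          using c10 by (simp add: powr_mult)
        also have "\<dots> \<le> c1 powr q * W * ((1 + real m) powr q * exp (- (real m / 4)))"
          using real_le_pow[OF D1, of m] W0 unfolding u_def by (intro mult_left_mono) auto
        also have "\<dots> \<le> c1 powr q * W * (F * exp (- (real m / 8)))"
          using poly_exp_bound[of q p m] q1 qp W0 unfolding F_def by (intro mult_left_mono) auto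
        also have "\<dots> = K * exp (- (real m / 8))" unfolding K_def by simp
        finally show ?thesis using W0 by (simp add: ennreal_mult'[symmetric] ennreal_leI)
      qed
      have "(\<integral>\<^sup>+\<omega>. g m \<omega> \<partial>M) \<le> ennreal ((c1 * (1 + real m)) powr q) * ennreal (W * exp (- (u / 4)))"
        unfolding i1 using i2 i3 by (intro mult_left_mono order_trans[OF i2] ennreal_leI) auto
      then show ?thesis using i4 by (rule order_trans)
    qed
    have "(\<integral>\<^sup>+\<omega>. ennreal (\<bar>MST_len (P \<omega> \<inter> cube 0 n) - MST_len (P \<omega> \<inter> (cube 0 n - cube x a))\<bar> powr q) \<partial>M)
        \<le> (\<integral>\<^sup>+\<omega>. (\<Sum>m. g m \<omega>) \<partial>M)"
      using pw by (rule nn_integral_mono)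
    also have "\<dots> = (\<Sum>m. \<integral>\<^sup>+\<omega>. g m \<omega> \<partial>M)" using gmeas by (rule nn_integral_suminf)
    also have "\<dots> \<le> (\<Sum>m. ennreal (K * exp (- (real m / 8))))" using tb by (intro suminf_le summableI)
    also have "\<dots> = ennreal C" unfolding C_def using K0 geom_summable[of K] by (intro suminf_ennreal2) auto
    finally show "(\<integral>\<^sup>+\<omega>. ennreal (\<bar>MST_len (P \<omega> \<inter> cube 0 n) - MST_len (P \<omega> \<inter> (cube 0 n - cube x a))\<bar> powr q) \<partial>M) \<le> ennreal C" .
  qed
qed

end
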